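(* Let $k$ be an infinite field, $n\ge 1$, and let $k\subset E$ be a finite Galois extension with Galois group $G_{E/k}=\mathrm{Gal}(E|k)$. Let $P\subset \mathbb{P}^n(E)$ be a set of $n+1$ distinct points which is stable under the natural action of $G_{E/k}$ (so $P$ is a $G_{E/k}$-set). Then there exists a set $Q\subset\mathbb{P}^n(E)$ of $n+1$ points, not all lying on a common hyperplane (i.e. in general linear position), which is stable under $G_{E/k}$ and isomorphic to $P$ as a $G_{E/k}$-set.
   Context: $G_{E/k}$ acts on $\mathbb{P}^n(E)$ coordinatewise. *)

theory Defs
  imports Main
begin

text \<open>The field E is the type 'e; the base field k is a subset K of it.\<close>

definition subfield :: "'e::field set \<Rightarrow> bool" where
  "subfield K \<longleftrightarrow> 0 \<in> K \<and> 1 \<in> K \<and>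
     (\<forall>x\<in>K. \<forall>y\<in>K. x + y \<in> K \<and> x * y \<in> K) \<and>
     (\<forall>x\<in>K. - x \<in> K \<and> inverse x \<in> K)"

definition finite_ext :: "'e::field set \<Rightarrow> bool" where
  "finite_ext K \<longleftrightarrow> (\<exists>B. finite B \<and>
     (\<forall>x. \<exists>c. (\<forall>b\<in>B. c b \<in> K) \<and> x = (\<Sum>b\<in>B. c b * b)))"

definition field_aut :: "('e::field \<Rightarrow> 'e) \<Rightarrow> bool" where
  "field_aut \<sigma> \<longleftrightarrow> bij \<sigma> \<and> (\<forall>x y. \<sigma> (x + y) = \<sigma> x + \<sigma> y \<and> \<sigma> (x * y) = \<sigma> x * \<sigma> y)"

definition Gal :: "'e::field set \<Rightarrow> ('e \<Rightarrow> 'e) set" where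
  "Gal K = {\<sigma>. field_aut \<sigma> \<and> (\<forall>x\<in>K. \<sigma> x = x)}"

text \<open>Finite Galois extension (Artin): finite, and the fixed field of Gal(E|K) is K.\<close>
definition finite_galois :: "'e::field set \<Rightarrow> bool" where
  "finite_galois K \<longleftrightarrow> subfield K \<and> finite_ext K \<and>
     {x. \<forall>\<sigma>\<in>Gal K. \<sigma> x = x} = K"

text \<open>Vectors in E^(n+1): coordinates 0..n, zero beyond.\<close>
definition vecs :: "nat \<Rightarrow> (nat \<Rightarrow> 'e::field) set" where
  "vecs n = {v. \<forall>i>n. v i = 0}"

definition proj_pt :: "(nat \<Rightarrow> 'e::field) \<Rightarrow> (nat \<Rightarrow> 'e) set" where
  "proj_pt v = {(\<lambda>i. c * v i) | c. c \<noteq> 0}"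

definition Proj :: "nat \<Rightarrow> (nat \<Rightarrow> 'e::field) set set" where
  "Proj n = {proj_pt v | v. v \<in> vecs n \<and> (\<exists>i. v i \<noteq> 0)}"

definition act :: "('e::field \<Rightarrow> 'e) \<Rightarrow> (nat \<Rightarrow> 'e) set \<Rightarrow> (nat \<Rightarrow> 'e) set" where
  "act \<sigma> p = (\<lambda>v i. \<sigma> (v i)) ` p"

definition G_stable :: "('e::field \<Rightarrow> 'e) set \<Rightarrow> (nat \<Rightarrow> 'e) set set \<Rightarrow> bool" where
  "G_stable G P \<longleftrightarrow> (\<forall>\<sigma>\<in>G. \<forall>p\<in>P. act \<sigma> p \<in> P)"

definition G_iso :: "('e::field \<Rightarrow> 'e) set \<Rightarrow> (nat \<Rightarrow> 'e) set set \<Rightarrow> (nat \<Rightarrow> 'e) set set \<Rightarrow> bool" where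
  "G_iso G P Q \<longleftrightarrow> (\<exists>f. bij_betw f P Q \<and> (\<forall>\<sigma>\<in>G. \<forall>p\<in>P. f (act \<sigma> p) = act \<sigma> (f p)))"

definition on_common_hyperplane :: "nat \<Rightarrow> (nat \<Rightarrow> 'e::field) set set \<Rightarrow> bool" where
  "on_common_hyperplane n Q \<longleftrightarrow> (\<exists>a::nat \<Rightarrow> 'e. (\<exists>i\<le>n. a i \<noteq> 0) \<and>
     (\<forall>q\<in>Q. \<forall>v\<in>q. (\<Sum>i\<le>n. a i * v i) = 0))"

end

theory Submission
  imports Defs "HOL-Computational_Algebra.Polynomial"
begin

lemma pol_facts:
  fixes d :: "nat \<Rightarrow> 'e::field"
  assumes "\<exists>i\<le>n. d i \<noteq> 0"
  shows "finite {x. (\<Sum>i\<le>n. d i * x^i) = 0}" and "card {x. (\<Sum>i\<le>n. d i * x^i) = 0} \<le> n"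
proof -
  define p where "p = (\<Sum>i\<le>n. monom (d i) i)"
  have ev: "poly p x = (\<Sum>i\<le>n. d i * x^i)" for x
    unfolding p_def poly_sum by (simp add: poly_monom)
  obtain i where i: "i \<le> n" "d i \<noteq> 0" using assms by blast
  have "coeff p i = d i" unfolding p_def using i(1) by (rule coeff_sum_monom)
  hence p0: "p \<noteq> 0" using i by auto
  have deg: "degree p \<le> n" unfolding p_def
    by (rule degree_sum_le) (auto intro: order_trans[OF degree_monom_le])
  show "finite {x. (\<Sum>i\<le>n. d i * x^i) = 0}"
    using poly_roots_finite[OF p0] by (simp add: ev)
  show "card {x. (\<Sum>i\<le>n. d i * x^i) = 0} \<le> n"
    using card_poly_roots_bound[OF p0] deg by (simp add: ev)
qed

definition nz :: "(nat \<Rightarrow> 'e::field) \<Rightarrow> (nat \<Rightarrow> 'e)" where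
  "nz v = (\<lambda>i. v i / v (LEAST j. v j \<noteq> 0))"

definition NN :: "(nat \<Rightarrow> 'e::field) set \<Rightarrow> (nat \<Rightarrow> 'e)" where
  "NN p = nz (SOME v. v \<in> p)"

lemma nz_scale:
  assumes "c \<noteq> (0::'e::field)"
  shows "nz (\<lambda>i. c * v i) = nz v"
proof -
  have L: "(LEAST j. c * v j \<noteq> 0) = (LEAST j. v j \<noteq> 0)" using assms by simp
  show ?thesis unfolding nz_def L by (rule ext) (use assms in simp)
qed

lemma proj_pt_scale:
  assumes "c \<noteq> (0::'e::field)"
  shows "proj_pt (\<lambda>i. c * v i) = proj_pt v"
proof
  show "proj_pt (\<lambda>i. c * v i) \<subseteq> proj_pt v"
  proof
    fix u assume "u \<in> proj_pt (\<lambda>i. c * v i)"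
    then obtain e where e: "e \<noteq> 0" "u = (\<lambda>i. e * (c * v i))" unfolding proj_pt_def by auto
    hence "u = (\<lambda>i. (e * c) * v i)" by (simp add: mult.assoc)
    moreover have "e * c \<noteq> 0" using e assms by simp
    ultimately show "u \<in> proj_pt v" unfolding proj_pt_def by blast
  qed
next
  show "proj_pt v \<subseteq> proj_pt (\<lambda>i. c * v i)"
  proof
    fix u assume "u \<in> proj_pt v"
    then obtain e where e: "e \<noteq> 0" "u = (\<lambda>i. e * v i)" unfolding proj_pt_def by auto
    hence "u = (\<lambda>i. (e / c) * (c * v i))" using assms by (auto simp: fun_eq_iff)
    moreover have "e / c \<noteq> 0" using e assms by simp
    ultimately show "u \<in> proj_pt (\<lambda>i. c * v i)" unfolding proj_pt_def by blast
  qed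
qed

lemma self_in_proj_pt: "v \<in> proj_pt (v::nat \<Rightarrow> 'e::field)"
  unfolding proj_pt_def by (rule CollectI, rule exI[of _ 1]) simp

lemma NN_proj: "NN (proj_pt (v::nat \<Rightarrow> 'e::field)) = nz v"
proof -
  have "\<exists>u. u \<in> proj_pt v" using self_in_proj_pt by blast
  hence "(SOME u. u \<in> proj_pt v) \<in> proj_pt v" by (rule someI_ex)
  then obtain c where "c \<noteq> 0" "(SOME u. u \<in> proj_pt v) = (\<lambda>i. c * v i)"
    unfolding proj_pt_def by blast
  thus ?thesis unfolding NN_def by (simp add: nz_scale)
qed

lemma proj_nz:
  assumes "\<exists>i. v i \<noteq> (0::'e::field)"
  shows "proj_pt (nz v) = proj_pt v"
proof -
  have "v (LEAST j. v j \<noteq> 0) \<noteq> 0" using assms by (rule LeastI_ex)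
  hence "inverse (v (LEAST j. v j \<noteq> 0)) \<noteq> 0" by simp
  moreover have "nz v = (\<lambda>i. inverse (v (LEAST j. v j \<noteq> 0)) * v i)"
    unfolding nz_def by (simp add: fun_eq_iff field_simps)
  ultimately show ?thesis by (simp add: proj_pt_scale)
qed

lemma aut_facts:
  assumes "field_aut (\<sigma>::'e::field \<Rightarrow> 'e)"
  shows "\<sigma> 0 = 0" "\<sigma> 1 = 1" "\<sigma> x = 0 \<longleftrightarrow> x = 0"
    "\<sigma> (a / b) = \<sigma> a / \<sigma> b" "\<sigma> (x ^ k) = \<sigma> x ^ k"
    "\<sigma> (a - b) = \<sigma> a - \<sigma> b"
proof -
  have add: "\<sigma> (x + y) = \<sigma> x + \<sigma> y" and mul: "\<sigma> (x * y) = \<sigma> x * \<sigma> y" for x y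
    using assms unfolding field_aut_def by auto
  have inj: "inj \<sigma>" using assms unfolding field_aut_def bij_def by auto
  have "\<sigma> 0 + \<sigma> 0 = \<sigma> 0 + 0" using add[of 0 0] by simp
  then show z: "\<sigma> 0 = 0" by (rule add_left_imp_eq)
  show zi: "\<sigma> x = 0 \<longleftrightarrow> x = 0" for x using z inj by (metis injD)
  have "\<sigma> 1 = \<sigma> 1 * \<sigma> 1" using mul[of 1 1] by simp
  moreover have "\<sigma> 1 \<noteq> 0" using zi by simp
  ultimately show o: "\<sigma> 1 = 1" by (metis mult_cancel_left1)
  have inv: "\<sigma> (inverse y) = inverse (\<sigma> y)" for y
  proof (cases "y = 0")
    case True thus ?thesis using z by simp
  next
    case False
    hence "\<sigma> y * \<sigma> (inverse y) = 1" using mul[of y "inverse y"] o by simp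
    thus ?thesis by (metis inverse_unique)
  qed
  show "\<sigma> (a / b) = \<sigma> a / \<sigma> b" by (simp add: divide_inverse mul inv)
  show "\<sigma> (x ^ k) = \<sigma> x ^ k" by (induction k) (simp_all add: o mul)
  have "\<sigma> (a - b) + \<sigma> b = \<sigma> a" using add[of "a - b" b] by simp
  thus "\<sigma> (a - b) = \<sigma> a - \<sigma> b" by (simp add: eq_diff_eq)
qed

lemma aut_sum:
  assumes "field_aut (\<sigma>::'e::field \<Rightarrow> 'e)" "finite A"
  shows "\<sigma> (\<Sum>i\<in>A. f i) = (\<Sum>i\<in>A. \<sigma> (f i))"
  using assms(2) apply (induction A rule: finite_induct)
  using assms(1) by (auto simp: aut_facts field_aut_def)

lemma act_proj:
  assumes "field_aut (\<sigma>::'e::field \<Rightarrow> 'e)"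
  shows "act \<sigma> (proj_pt v) = proj_pt (\<lambda>i. \<sigma> (v i))"
proof
  have mul: "\<sigma> (x * y) = \<sigma> x * \<sigma> y" for x y
    using assms unfolding field_aut_def by auto
  show "act \<sigma> (proj_pt v) \<subseteq> proj_pt (\<lambda>i. \<sigma> (v i))"
    unfolding act_def proj_pt_def using aut_facts(3)[OF assms] by (auto simp: mul)
  show "proj_pt (\<lambda>i. \<sigma> (v i)) \<subseteq> act \<sigma> (proj_pt v)"
  proof
    fix u assume "u \<in> proj_pt (\<lambda>i. \<sigma> (v i))"
    then obtain d where d: "d \<noteq> 0" "u = (\<lambda>i. d * \<sigma> (v i))" unfolding proj_pt_def by auto
    have "surj \<sigma>" using assms unfolding field_aut_def bij_def by auto
    then obtain c where c: "d = \<sigma> c" by blast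
    hence "c \<noteq> 0" using d aut_facts(1)[OF assms] by auto
    moreover have "u = (\<lambda>i. \<sigma> (c * v i))" using d c by (simp add: mul)
    ultimately show "u \<in> act \<sigma> (proj_pt v)" unfolding act_def proj_pt_def
      by (intro image_eqI[of _ _ "\<lambda>i. c * v i"]) auto
  qed
qed

lemma nz_aut:
  assumes "field_aut (\<sigma>::'e::field \<Rightarrow> 'e)"
  shows "nz (\<lambda>i. \<sigma> (v i)) = (\<lambda>i. \<sigma> (nz v i))"
  unfolding nz_def using aut_facts[OF assms] by simp

theorem lemma4p1:
  fixes K :: "'e::field set" and n :: nat and P :: "(nat \<Rightarrow> 'e) set set"
  assumes "infinite K"
    and "finite_galois K"
    and "n \<ge> 1"
    and "P \<subseteq> Proj n" and "card P = n + 1"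
    and "G_stable (Gal K) P"
  shows "\<exists>Q. Q \<subseteq> Proj n \<and> card Q = n + 1 \<and> \<not> on_common_hyperplane n Q
           \<and> G_stable (Gal K) Q \<and> G_iso (Gal K) P Q"
proof -
  have finP: "finite P"
  proof (rule ccontr)
    assume "infinite P"
    hence "card P = 0" by simp
    thus False using assms(5) by simp
  qed
  have Pform: "\<exists>v. p = proj_pt v \<and> v \<in> vecs n \<and> (\<exists>i. v i \<noteq> 0)" if "p \<in> P" for p
    using that assms(4) unfolding Proj_def by blast
  have NNhigh: "NN p i = 0" if h: "p \<in> P" "i > n" for p i
  proof -
    obtain v where v: "p = proj_pt v" "v \<in> vecs n" using Pform[OF h(1)] by blast
    show ?thesis using v h(2) unfolding vecs_def by (simp add: NN_proj nz_def)
  qed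
  have NNinj: "p = p'" if h: "p \<in> P" "p' \<in> P" "NN p = NN p'" for p p'
  proof -
    obtain v where v: "p = proj_pt v" "\<exists>i. v i \<noteq> 0" using Pform[OF h(1)] by blast
    obtain w where w: "p' = proj_pt w" "\<exists>i. w i \<noteq> 0" using Pform[OF h(2)] by blast
    have "nz v = nz w" using h(3) v w by (simp add: NN_proj)
    thus ?thesis using v w proj_nz by metis
  qed
  have NNact: "NN (act \<sigma> p) = (\<lambda>i. \<sigma> (NN p i))" if h: "\<sigma> \<in> Gal K" "p \<in> P" for \<sigma> p
  proof -
    have fa: "field_aut \<sigma>" using h(1) unfolding Gal_def by auto
    obtain v where v: "p = proj_pt v" using Pform[OF h(2)] by blast
    show ?thesis using v by (simp add: act_proj[OF fa] NN_proj nz_aut[OF fa])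
  qed
  define D where "D = {(p, p'). p \<in> P \<and> p' \<in> P \<and> p \<noteq> p'}"
  define B where "B = (\<Union>(p, p')\<in>D. {x. (\<Sum>i\<le>n. (NN p i - NN p' i) * x^i) = 0})"
  have "D \<subseteq> P \<times> P" unfolding D_def by auto
  hence "finite D" using finP by (meson finite_SigmaI finite_subset)
  moreover have "finite {x. (\<Sum>i\<le>n. (NN p i - NN p' i) * x^i) = 0}" if "(p, p') \<in> D" for p p'
  proof (rule pol_facts(1))
    have pp: "p \<in> P" "p' \<in> P" "p \<noteq> p'" using that unfolding D_def by auto
    hence "NN p \<noteq> NN p'" using NNinj by blast
    then obtain i where i: "NN p i \<noteq> NN p' i" by auto
    hence "i \<le> n" using NNhigh pp by (metis not_le)
    thus "\<exists>i\<le>n. NN p i - NN p' i \<noteq> 0" using i by auto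
  qed
  ultimately have "finite B" unfolding B_def by auto
  hence "infinite (K - B)" using assms(1) by (simp add: Diff_infinite_finite)
  hence "K - B \<noteq> {}" by (metis finite.emptyI)
  then obtain x where x: "x \<in> K" "x \<notin> B" by blast
  define \<alpha> where "\<alpha> p = (\<Sum>i\<le>n. NN p i * x^i)" for p
  have \<alpha>inj: "inj_on \<alpha> P"
  proof (rule inj_onI, rule ccontr)
    fix p p' assume pp: "p \<in> P" "p' \<in> P" "\<alpha> p = \<alpha> p'" "p \<noteq> p'"
    hence "(p, p') \<in> D" unfolding D_def by auto
    moreover have "(\<Sum>i\<le>n. (NN p i - NN p' i) * x^i) = 0"
      using pp(3) unfolding \<alpha>_def by (simp add: left_diff_distrib sum_subtractf)
    ultimately have "x \<in> B" unfolding B_def by blast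
    thus False using x by simp
  qed
  have \<alpha>act: "\<sigma> (\<alpha> p) = \<alpha> (act \<sigma> p)" if "\<sigma> \<in> Gal K" "p \<in> P" for \<sigma> p
  proof -
    have fa: "field_aut \<sigma>" and fx: "\<sigma> x = x" using that(1) x(1) unfolding Gal_def by auto
    have mul: "\<sigma> (a * b) = \<sigma> a * \<sigma> b" for a b using fa unfolding field_aut_def by auto
    show ?thesis unfolding \<alpha>_def
      by (simp add: aut_sum[OF fa] mul aut_facts[OF fa] fx NNact[OF that])
  qed
  define V where "V p = (\<lambda>i. if i \<le> n then \<alpha> p ^ i else 0)" for p
  define f where "f p = proj_pt (V p)" for p
  define Q where "Q = f ` P"
  have V0: "V p 0 = 1" for p unfolding V_def by simp
  have finj: "inj_on f P"
  proof (rule inj_onI)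
    fix p p' assume pp: "p \<in> P" "p' \<in> P" "f p = f p'"
    hence "V p \<in> proj_pt (V p')" unfolding f_def using self_in_proj_pt by metis
    then obtain c where c: "V p = (\<lambda>i. c * V p' i)" unfolding proj_pt_def by auto
    hence "c = 1" using V0 by (metis mult.right_neutral)
    hence "V p 1 = V p' 1" using c by simp
    hence "\<alpha> p = \<alpha> p'" using assms(3) unfolding V_def by simp
    thus "p = p'" using \<alpha>inj pp by (meson inj_onD)
  qed
  have fact: "act \<sigma> (f p) = f (act \<sigma> p)" if "\<sigma> \<in> Gal K" "p \<in> P" for \<sigma> p
  proof -
    have fa: "field_aut \<sigma>" using that(1) unfolding Gal_def by auto
    have "(\<lambda>i. \<sigma> (V p i)) = V (act \<sigma> p)"
      unfolding V_def using aut_facts[OF fa] \<alpha>act[OF that] by (auto simp: fun_eq_iff)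
    thus ?thesis unfolding f_def by (simp add: act_proj[OF fa])
  qed
  have stP: "act \<sigma> p \<in> P" if "\<sigma> \<in> Gal K" "p \<in> P" for \<sigma> p
    using assms(6) that unfolding G_stable_def by auto
  have "Q \<subseteq> Proj n"
  proof
    fix q assume "q \<in> Q"
    then obtain p where "q = proj_pt (V p)" unfolding Q_def f_def by auto
    moreover have "V p \<in> vecs n" unfolding vecs_def V_def by simp
    moreover have "\<exists>i. V p i \<noteq> 0" using V0 by (metis one_neq_zero)
    ultimately show "q \<in> Proj n" unfolding Proj_def by blast
  qed
  moreover have "card Q = n + 1" unfolding Q_def using card_image[OF finj] assms(5) by simp
  moreover have "\<not> on_common_hyperplane n Q"
  proof
    assume "on_common_hyperplane n Q"
    then obtain a :: "nat \<Rightarrow> 'e" where a: "\<exists>i\<le>n. a i \<noteq> 0"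
      and h: "\<forall>q\<in>Q. \<forall>v\<in>q. (\<Sum>i\<le>n. a i * v i) = 0"
      unfolding on_common_hyperplane_def by blast
    have "\<alpha> ` P \<subseteq> {y. (\<Sum>i\<le>n. a i * y^i) = 0}"
    proof
      fix y assume "y \<in> \<alpha> ` P"
      then obtain p where p: "p \<in> P" "y = \<alpha> p" by auto
      have "f p \<in> Q" using p unfolding Q_def by auto
      hence "(\<Sum>i\<le>n. a i * V p i) = 0" using h self_in_proj_pt unfolding f_def by blast
      thus "y \<in> {y. (\<Sum>i\<le>n. a i * y^i) = 0}" using p unfolding V_def by simp
    qed
    hence "card (\<alpha> ` P) \<le> card {y. (\<Sum>i\<le>n. a i * y^i) = 0}"
      using pol_facts(1)[OF a] by (rule card_mono[rotated])
    also have "\<dots> \<le> n" by (rule pol_facts(2)[OF a])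
    finally show False using card_image[OF \<alpha>inj] assms(5) by simp
  qed
  moreover have "G_stable (Gal K) Q"
    unfolding G_stable_def Q_def using fact stP by auto
  moreover have "G_iso (Gal K) P Q"
    unfolding G_iso_def Q_def using finj fact
    by (intro exI[of _ f]) (auto simp: bij_betw_def)
  ultimately show ?thesis by blast
qed

end
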